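(* Let $S$ be an abelian group and let $\{G_j\}_{j\in J}$ be the family of all proper subgroups of $S$. Then for every left $S$-act $A$, the geometric equivalence class $[A]=\{B: B\overset{\triangle}{\sim}A\}$ has a representation of exactly one of the following three types: (i) $[A]=\big[\coprod_{k\in K}\overline{G_k}\big]$ for some $K\subseteq J$; (ii) $[A]=\big[\coprod_{k\in K}\overline{G_k}\amalg z\big]$ for some $K\subseteq J$; (iii) $[A]=\big[\coprod_{k\in K}\overline{G_k}\amalg z_1\amalg z_2\big]$ for some $K\subseteq J$. (That is, $A$ is geometrically equivalent to an $S$-act of one of these forms, and $[A]$ does not admit representations of two different types.)
   Context: For a monoid $S$, a left $S$-act is a nonempty set $A$ with a map $S\times A\to A$, $(s,a)\mapsto sa$, such that $1a=a$ and $(st)a=s(ta)$; homomorphisms are maps $f$ with $f(sa)=sf(a)$. Coproducts $\amalg$ of $S$-acts are disjoint unions with the induced action. For a nonempty finite set $X$, $F_X=\coprod_{x\in X}S_x$ is the free $S$-act on $X$ (a disjoint union of copies of the left regular act ${}_SS$). For an $S$-act $G$ and a relation $T\subseteq F_X\times F_X$, let $T'_G=\{\mu:F_X\to G \text{ homomorphism}: T\subseteq\ker\mu\}$ and $T''_G=\bigcap_{\mu\in T'_G}\ker\mu$ (empty intersection $=F_X\times F_X$). $G_1\overset{\triangle}{\sim}G_2$ (geometric equivalence) iff $T''_{G_1}=T''_{G_2}$ for every nonempty finite $X$ and every $T\subseteq F_X\times F_X$. For a subgroup $H$ of $S$, $\overline{H}=S/H$ is the $S$-act of cosets $tH$ with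 $s\cdot tH=stH$. The symbols $z,z_1,z_2$ denote one-element $S$-acts. *)

theory Defs
  imports "HOL-Algebra.Coset"
begin

definition is_act :: "('s,'m) monoid_scheme \<Rightarrow> 'a set \<Rightarrow> ('s \<Rightarrow> 'a \<Rightarrow> 'a) \<Rightarrow> bool" where
  "is_act S A f \<longleftrightarrow> A \<noteq> {}
     \<and> (\<forall>s\<in>carrier S. \<forall>a\<in>A. f s a \<in> A)
     \<and> (\<forall>a\<in>A. f \<one>\<^bsub>S\<^esub> a = a)
     \<and> (\<forall>s\<in>carrier S. \<forall>t\<in>carrier S. \<forall>a\<in>A. f (s \<otimes>\<^bsub>S\<^esub> t) a = f s (f t a))"

definition is_act_hom :: "('s,'m) monoid_scheme \<Rightarrow> 'a set \<Rightarrow> ('s \<Rightarrow> 'a \<Rightarrow> 'a)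
    \<Rightarrow> 'b set \<Rightarrow> ('s \<Rightarrow> 'b \<Rightarrow> 'b) \<Rightarrow> ('a \<Rightarrow> 'b) \<Rightarrow> bool" where
  "is_act_hom S A f B g \<mu> \<longleftrightarrow> (\<forall>a\<in>A. \<mu> a \<in> B) \<and> (\<forall>s\<in>carrier S. \<forall>a\<in>A. \<mu> (f s a) = g s (\<mu> a))"

text \<open>Free act F_X on a finite set X (of naturals): disjoint union of copies of S.\<close>
definition free_carrier :: "('s,'m) monoid_scheme \<Rightarrow> nat set \<Rightarrow> (nat \<times> 's) set" where
  "free_carrier S X = X \<times> carrier S"

definition free_action :: "('s,'m) monoid_scheme \<Rightarrow> 's \<Rightarrow> nat \<times> 's \<Rightarrow> nat \<times> 's" where
  "free_action S s p = (fst p, s \<otimes>\<^bsub>S\<^esub> snd p)"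

definition act_ker :: "('s,'m) monoid_scheme \<Rightarrow> nat set \<Rightarrow> (nat \<times> 's \<Rightarrow> 'b) \<Rightarrow> ((nat \<times> 's) \<times> (nat \<times> 's)) set" where
  "act_ker S X \<mu> = {(p,q). p \<in> free_carrier S X \<and> q \<in> free_carrier S X \<and> \<mu> p = \<mu> q}"

definition T_prime :: "('s,'m) monoid_scheme \<Rightarrow> 'b set \<Rightarrow> ('s \<Rightarrow> 'b \<Rightarrow> 'b) \<Rightarrow> nat set
    \<Rightarrow> ((nat \<times> 's) \<times> (nat \<times> 's)) set \<Rightarrow> (nat \<times> 's \<Rightarrow> 'b) set" where
  "T_prime S G g X T = {\<mu>. is_act_hom S (free_carrier S X) (free_action S) G g \<mu> \<and> T \<subseteq> act_ker S X \<mu>}"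

text \<open>T''_G: intersection of kernels (empty intersection = F_X x F_X).\<close>
definition T_dprime :: "('s,'m) monoid_scheme \<Rightarrow> 'b set \<Rightarrow> ('s \<Rightarrow> 'b \<Rightarrow> 'b) \<Rightarrow> nat set
    \<Rightarrow> ((nat \<times> 's) \<times> (nat \<times> 's)) set \<Rightarrow> ((nat \<times> 's) \<times> (nat \<times> 's)) set" where
  "T_dprime S G g X T = (free_carrier S X \<times> free_carrier S X) \<inter> (\<Inter>\<mu>\<in>T_prime S G g X T. act_ker S X \<mu>)"

definition geom_equiv :: "('s,'m) monoid_scheme \<Rightarrow> 'a set \<Rightarrow> ('s \<Rightarrow> 'a \<Rightarrow> 'a)
    \<Rightarrow> 'b set \<Rightarrow> ('s \<Rightarrow> 'b \<Rightarrow> 'b) \<Rightarrow> bool" where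
  "geom_equiv S A f B g \<longleftrightarrow> (\<forall>X::nat set. finite X \<and> X \<noteq> {} \<longrightarrow>
     (\<forall>T. T \<subseteq> free_carrier S X \<times> free_carrier S X \<longrightarrow> T_dprime S A f X T = T_dprime S B g X T))"

definition proper_subgroups :: "('s,'m) monoid_scheme \<Rightarrow> 's set set" where
  "proper_subgroups S = {H. subgroup H S \<and> H \<noteq> carrier S}"

text \<open>The act  (coproduct over H in K of S/H)  amalg n one-element acts (n = 0,1,2).
  Element Inl (H, tH) is the coset tH in the copy indexed by H; Inr i is the i-th one-point act.\<close>
definition rep_carrier :: "('s,'m) monoid_scheme \<Rightarrow> 's set set \<Rightarrow> nat \<Rightarrow> ('s set \<times> 's set + nat) set" where
  "rep_carrier S K n = {Inl (H, t <#\<^bsub>S\<^esub> H) | H t. H \<in> K \<and> t \<in> carrier S} \<union> Inr ` {..<n}"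

definition rep_action :: "('s,'m) monoid_scheme \<Rightarrow> 's \<Rightarrow> 's set \<times> 's set + nat \<Rightarrow> 's set \<times> 's set + nat" where
  "rep_action S s x = (case x of Inl (H, C) \<Rightarrow> Inl (H, s <#\<^bsub>S\<^esub> C) | Inr i \<Rightarrow> Inr i)"

end

theory Submission
  imports Defs
begin

lemma sep_sub:
  assumes sep: "\<forall>b1\<in>B. \<forall>b2\<in>B. b1 \<noteq> b2 \<longrightarrow> (\<exists>\<phi>. is_act_hom S B g A f \<phi> \<and> \<phi> b1 \<noteq> \<phi> b2)"
  shows "T_dprime S A f X T \<subseteq> T_dprime S B g X T"
proof
  fix pq assume pq: "pq \<in> T_dprime S A f X T"
  obtain p q where pqd: "pq = (p,q)" by (cases pq)
  have F: "p \<in> free_carrier S X" "q \<in> free_carrier S X" using pq pqd unfolding T_dprime_def by auto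
  have inA: "\<And>\<mu>. \<mu> \<in> T_prime S A f X T \<Longrightarrow> \<mu> p = \<mu> q"
    using pq pqd unfolding T_dprime_def act_ker_def by auto
  have "\<nu> p = \<nu> q" if nu: "\<nu> \<in> T_prime S B g X T" for \<nu>
  proof (rule ccontr)
    assume ne: "\<nu> p \<noteq> \<nu> q"
    have hom: "is_act_hom S (free_carrier S X) (free_action S) B g \<nu>" and TK: "T \<subseteq> act_ker S X \<nu>"
      using nu unfolding T_prime_def by auto
    have "\<nu> p \<in> B" "\<nu> q \<in> B" using hom F unfolding is_act_hom_def by auto
    then obtain \<phi> where ph: "is_act_hom S B g A f \<phi>" "\<phi> (\<nu> p) \<noteq> \<phi> (\<nu> q)" using sep ne by blast
    have "is_act_hom S (free_carrier S X) (free_action S) A f (\<phi> \<circ> \<nu>)"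
      using hom ph(1) unfolding is_act_hom_def by auto
    moreover have "T \<subseteq> act_ker S X (\<phi> \<circ> \<nu>)" using TK unfolding act_ker_def by auto
    ultimately have "(\<phi> \<circ> \<nu>) \<in> T_prime S A f X T" unfolding T_prime_def by auto
    from inA[OF this] ph(2) show False by simp
  qed
  then show "pq \<in> T_dprime S B g X T" using F pqd unfolding T_dprime_def act_ker_def by auto
qed

lemma geom_equiv_sep:
  assumes "\<forall>b1\<in>B. \<forall>b2\<in>B. b1 \<noteq> b2 \<longrightarrow> (\<exists>\<phi>. is_act_hom S B g A f \<phi> \<and> \<phi> b1 \<noteq> \<phi> b2)"
    and "\<forall>b1\<in>A. \<forall>b2\<in>A. b1 \<noteq> b2 \<longrightarrow> (\<exists>\<phi>. is_act_hom S A f B g \<phi> \<and> \<phi> b1 \<noteq> \<phi> b2)"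
  shows "geom_equiv S A f B g"
  unfolding geom_equiv_def using sep_sub[OF assms(1)] sep_sub[OF assms(2)] by blast

lemma act_props:
  assumes "is_act S A f"
  shows "\<And>s a. s \<in> carrier S \<Longrightarrow> a \<in> A \<Longrightarrow> f s a \<in> A"
    and "\<And>a. a \<in> A \<Longrightarrow> f \<one>\<^bsub>S\<^esub> a = a"
    and "\<And>s t a. s \<in> carrier S \<Longrightarrow> t \<in> carrier S \<Longrightarrow> a \<in> A \<Longrightarrow> f (s \<otimes>\<^bsub>S\<^esub> t) a = f s (f t a)"
    and "A \<noteq> {}"
  using assms unfolding is_act_def by auto

lemma orbit_sym:
  fixes S (structure)
  assumes G: "group S" and act: "is_act S A f" and a: "a \<in> A" and s: "s \<in> carrier S" and b: "b = f s a"
  shows "a = f (inv\<^bsub>S\<^esub> s) b"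
proof -
  interpret group S by fact
  have "f (inv s) b = f (inv s \<otimes> s) a" using act_props(3)[OF act, of "inv s" s a] a s b by simp
  also have "\<dots> = a" using act_props(2)[OF act] a s by simp
  finally show ?thesis by simp
qed

lemma orbit_hom:
  fixes S (structure)
  assumes G: "group S" and actA: "is_act S A f" and actB: "is_act S B g"
    and cB: "\<forall>a\<in>A. c a \<in> B"
    and cst: "\<forall>a\<in>A. \<forall>s\<in>carrier S. f s a = a \<longrightarrow> g s (c a) = c a"
    and PA: "P \<subseteq> A" and Pd: "\<forall>p\<in>P. \<forall>q\<in>P. q \<in> (\<lambda>s. f s p) ` carrier S \<longrightarrow> p = q"
  shows "\<exists>\<phi>. is_act_hom S A f B g \<phi> \<and> (\<forall>p\<in>P. \<phi> p = c p)"
proof -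
  interpret group S by fact
  note A1 = act_props(1)[OF actA] and A2 = act_props(2)[OF actA] and A3 = act_props(3)[OF actA]
  note B1 = act_props(1)[OF actB] and B2 = act_props(2)[OF actB] and B3 = act_props(3)[OF actB]
  define Orb where "Orb a = (\<lambda>s. f s a) ` carrier S" for a
  have self: "a \<in> Orb a" if "a \<in> A" for a
    using A2[OF that] unfolding Orb_def by (metis image_eqI one_closed)
  have Oeq: "Orb b = Orb a" if a: "a \<in> A" and b: "b \<in> Orb a" for a b
  proof -
    obtain s where s: "s \<in> carrier S" "b = f s a" using b unfolding Orb_def by auto
    show ?thesis
    proof
      show "Orb b \<subseteq> Orb a"
      proof
        fix x assume "x \<in> Orb b"
        then obtain u where u: "u \<in> carrier S" "x = f u b" unfolding Orb_def by auto
        have "f (u \<otimes> s) a = f u (f s a)" using A3[of u s a] s(1) u(1) a by blast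
        then have "x = f (u \<otimes> s) a" using u(2) s(2) by (simp only:)
        then show "x \<in> Orb a" unfolding Orb_def using u s by auto
      qed
      show "Orb a \<subseteq> Orb b"
      proof
        fix x assume "x \<in> Orb a"
        then obtain u where u: "u \<in> carrier S" "x = f u a" unfolding Orb_def by auto
        have ab: "a = f (inv s) b" using orbit_sym[OF G actA a s(1) s(2)] .
        have bA: "b \<in> A" using A1 s a by simp
        have "f (u \<otimes> inv s) b = f u (f (inv s) b)" using A3[of u "inv s" b] u s bA by simp
        then have "x = f (u \<otimes> inv s) b" using u(2) ab by simp
        then show "x \<in> Orb b" unfolding Orb_def using u s by auto
      qed
    qed
  qed
  have OA: "Orb a \<subseteq> A" if "a \<in> A" for a using A1 that unfolding Orb_def by auto
  define r where "r a = (if \<exists>p\<in>P. p \<in> Orb a then (SOME p. p \<in> P \<and> p \<in> Orb a) else (SOME x. x \<in> Orb a))" for a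
  have rO: "r a \<in> Orb a" if "a \<in> A" for a
  proof (cases "\<exists>p\<in>P. p \<in> Orb a")
    case True
    then have e: "r a = (SOME p. p \<in> P \<and> p \<in> Orb a)" unfolding r_def by simp
    from True have "\<exists>p. p \<in> P \<and> p \<in> Orb a" by blast
    then have "(SOME p. p \<in> P \<and> p \<in> Orb a) \<in> P \<and> (SOME p. p \<in> P \<and> p \<in> Orb a) \<in> Orb a" by (rule someI_ex)
    then show ?thesis using e by simp
  next
    case False
    then have e: "r a = (SOME p. p \<in> Orb a)" unfolding r_def by simp
    from self[OF that] have "\<exists>p. p \<in> Orb a" by blast
    then have "(SOME p. p \<in> Orb a) \<in> Orb a" by (rule someI_ex)
    then show ?thesis using e by simp
  qed
  have rA: "r a \<in> A" if "a \<in> A" for a using rO[OF that] OA[OF that] by auto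
  have rinv: "r (f s a) = r a" if "a \<in> A" "s \<in> carrier S" for a s
  proof -
    have "Orb (f s a) = Orb a" using Oeq that unfolding Orb_def by auto
    then show ?thesis unfolding r_def by simp
  qed
  have rP: "r p = p" if p: "p \<in> P" for p
  proof -
    have pA: "p \<in> A" using p PA by auto
    have ex: "\<exists>p'\<in>P. p' \<in> Orb p" using p self[OF pA] by auto
    then have e: "r p = (SOME p'. p' \<in> P \<and> p' \<in> Orb p)" unfolding r_def by simp
    from ex have "\<exists>p'. p' \<in> P \<and> p' \<in> Orb p" by blast
    then have "(SOME p'. p' \<in> P \<and> p' \<in> Orb p) \<in> P \<and> (SOME p'. p' \<in> P \<and> p' \<in> Orb p) \<in> Orb p" by (rule someI_ex)
    then have r1: "r p \<in> P \<and> r p \<in> Orb p" using e by simp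
    then have "Orb (r p) = Orb p" using Oeq pA by auto
    then have "p \<in> Orb (r p)" using self[OF pA] by simp
    then show ?thesis using Pd r1 p unfolding Orb_def by auto
  qed
  define \<sigma> where "\<sigma> a = (SOME s. s \<in> carrier S \<and> f s (r a) = a)" for a
  have \<sigma>: "\<sigma> a \<in> carrier S \<and> f (\<sigma> a) (r a) = a" if a: "a \<in> A" for a
  proof -
    have "Orb (r a) = Orb a" using Oeq[OF a rO[OF a]] .
    then have "a \<in> Orb (r a)" using self a by simp
    then have "\<exists>s. s \<in> carrier S \<and> f s (r a) = a" unfolding Orb_def by auto
    then show ?thesis unfolding \<sigma>_def by (rule someI_ex)
  qed
  have key: "g s (c x) = g t (c x)" if x: "x \<in> A" and s: "s \<in> carrier S" and t: "t \<in> carrier S"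
    and e: "f s x = f t x" for x s t
  proof -
    have isS: "inv s \<in> carrier S" using s by simp
    have "f (inv s \<otimes> t) x = f (inv s) (f t x)" using A3[OF isS t x] .
    also have "\<dots> = f (inv s) (f s x)" using e by simp
    also have "\<dots> = f (inv s \<otimes> s) x" using A3[OF isS s x] by simp
    also have "\<dots> = x" using A2[OF x] s by simp
    finally have "f (inv s \<otimes> t) x = x" .
    then have st: "g (inv s \<otimes> t) (c x) = c x" using cst x isS t by blast
    have "g t (c x) = g (s \<otimes> (inv s \<otimes> t)) (c x)" using s t isS by (simp add: m_assoc[symmetric])
    also have "\<dots> = g s (g (inv s \<otimes> t) (c x))" using B3[OF s _ cB[rule_format, OF x]] isS t by simp
    also have "\<dots> = g s (c x)" using st by simp
    finally show ?thesis by simp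
  qed
  define \<phi> where "\<phi> a = g (\<sigma> a) (c (r a))" for a
  have "is_act_hom S A f B g \<phi>"
    unfolding is_act_hom_def
  proof (intro conjI ballI)
    fix a assume a: "a \<in> A"
    show "\<phi> a \<in> B" unfolding \<phi>_def using B1 \<sigma>[OF a] cB rA[OF a] by blast
  next
    fix t a assume t: "t \<in> carrier S" and a: "a \<in> A"
    have fa: "f t a \<in> A" using A1 t a by blast
    have r1: "r (f t a) = r a" using rinv a t by blast
    have sa: "\<sigma> a \<in> carrier S" "f (\<sigma> a) (r a) = a" using \<sigma>[OF a] by auto
    have sfa: "\<sigma> (f t a) \<in> carrier S" "f (\<sigma> (f t a)) (r a) = f t a" using \<sigma>[OF fa] r1 by auto
    have "f (t \<otimes> \<sigma> a) (r a) = f t (f (\<sigma> a) (r a))" using A3[OF t sa(1) rA[OF a]] .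
    also have "\<dots> = f t a" using sa(2) by simp
    finally have e1: "f (\<sigma> (f t a)) (r a) = f (t \<otimes> \<sigma> a) (r a)" using sfa(2) by simp
    have tsa: "t \<otimes> \<sigma> a \<in> carrier S" using t sa(1) by simp
    have "\<phi> (f t a) = g (\<sigma> (f t a)) (c (r a))" unfolding \<phi>_def using r1 by simp
    also have "\<dots> = g (t \<otimes> \<sigma> a) (c (r a))" using key[OF rA[OF a] sfa(1) tsa e1] .
    also have "\<dots> = g t (\<phi> a)" unfolding \<phi>_def using B3[OF t sa(1) cB[rule_format, OF rA[OF a]]] .
    finally show "\<phi> (f t a) = g t (\<phi> a)" .
  qed
  moreover have "\<phi> p = c p" if p: "p \<in> P" for p
  proof -
    have pA: "p \<in> A" using p PA by auto
    have sp: "\<sigma> p \<in> carrier S" "f (\<sigma> p) (r p) = p" using \<sigma>[OF pA] by auto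
    have "f (\<sigma> p) p = p" using sp(2) rP[OF p] by simp
    then have "g (\<sigma> p) (c p) = c p" using cst pA sp(1) by blast
    then show ?thesis unfolding \<phi>_def using rP[OF p] by simp
  qed
  ultimately show ?thesis by blast
qed


lemma coset_fix:
  fixes S (structure)
  assumes G: "comm_group S" and H: "subgroup H S" and s: "s \<in> carrier S" and t: "t \<in> carrier S"
  shows "s <# (t <# H) = t <# H \<longleftrightarrow> s \<in> H"
proof -
  interpret comm_group S by fact
  have Hc: "H \<subseteq> carrier S" using H subgroup.subset by blast
  have e: "s <# (t <# H) = (s \<otimes> t) <# H" using lcos_m_assoc[OF Hc s t] .
  show ?thesis
  proof
    assume eq: "s <# (t <# H) = t <# H"
    have "s \<otimes> t \<in> (s \<otimes> t) <# H" unfolding l_coset_def using s t subgroup.one_closed[OF H] by force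
    then have "s \<otimes> t \<in> t <# H" using eq e by simp
    then obtain h where h: "h \<in> H" "s \<otimes> t = t \<otimes> h" unfolding l_coset_def by auto
    have hc: "h \<in> carrier S" using h Hc by auto
    have "s \<otimes> t = h \<otimes> t" using h(2) m_comm[OF t hc] by simp
    then have "s = h" using s t hc by simp
    then show "s \<in> H" using h by simp
  next
    assume sH: "s \<in> H"
    have "(s \<otimes> t) <# H = (t \<otimes> s) <# H" using m_comm s t by simp
    also have "\<dots> = t <# (s <# H)" using lcos_m_assoc[OF Hc t s] by simp
    also have "\<dots> = t <# H" using coset_join3[OF s H sH] by simp
    finally show "s <# (t <# H) = t <# H" using e by simp
  qed
qed

definition stab :: "('s,'m) monoid_scheme \<Rightarrow> ('s \<Rightarrow> 'a \<Rightarrow> 'a) \<Rightarrow> 'a \<Rightarrow> 's set" where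
  "stab S f a = {s \<in> carrier S. f s a = a}"

lemma stab_subgroup:
  fixes S (structure)
  assumes G: "group S" and act: "is_act S A f" and a: "a \<in> A"
  shows "subgroup (stab S f a) S"
proof -
  interpret group S by fact
  note A2 = act_props(2)[OF act] and A3 = act_props(3)[OF act]
  show ?thesis
  proof
    show "stab S f a \<subseteq> carrier S" unfolding stab_def by auto
    show "\<one> \<in> stab S f a" unfolding stab_def using A2 a by auto
  next
    fix x y assume x: "x \<in> stab S f a" and y: "y \<in> stab S f a"
    then show "x \<otimes> y \<in> stab S f a" unfolding stab_def using A3 a by auto
  next
    fix x assume x: "x \<in> stab S f a"
    then have xc: "x \<in> carrier S" and fx: "f x a = a" unfolding stab_def by auto
    have "f (inv x) a = f (inv x) (f x a)" using fx by simp
    also have "\<dots> = f (inv x \<otimes> x) a" using A3[of "inv x" x a] xc a by simp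
    also have "\<dots> = a" using A2 a xc by simp
    finally show "inv x \<in> stab S f a" unfolding stab_def using xc by simp
  qed
qed

lemma rep_carrier_iff:
  "x \<in> rep_carrier S K n \<longleftrightarrow> (\<exists>H t. H \<in> K \<and> t \<in> carrier S \<and> x = Inl (H, t <#\<^bsub>S\<^esub> H)) \<or> (\<exists>i<n. x = Inr i)"
  unfolding rep_carrier_def by auto

lemma rep_act:
  fixes S (structure)
  assumes G: "group S" and K: "\<forall>H\<in>K. subgroup H S" and ne: "rep_carrier S K n \<noteq> {}"
  shows "is_act S (rep_carrier S K n) (rep_action S)"
proof -
  interpret group S by fact
  have Hc: "H \<subseteq> carrier S" if "H \<in> K" for H using K that subgroup.subset by blast
  have cl: "rep_action S s x \<in> rep_carrier S K n \<and> rep_action S \<one> x = x \<and>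
     (\<forall>u\<in>carrier S. rep_action S (s \<otimes> u) x = rep_action S s (rep_action S u x))"
    if s: "s \<in> carrier S" and x: "x \<in> rep_carrier S K n" for s x
  proof -
    from x consider (L) H t where "H \<in> K" "t \<in> carrier S" "x = Inl (H, t <# H)"
      | (R) i where "i < n" "x = Inr i" unfolding rep_carrier_iff by blast
    then show ?thesis
    proof cases
      case L
      have a1: "s <# (t <# H) = (s \<otimes> t) <# H" using lcos_m_assoc[OF Hc[OF L(1)] s L(2)] .
      have a2: "\<one> <# (t <# H) = t <# H" using lcos_m_assoc[OF Hc[OF L(1)] _ L(2)] L(2) by simp
      have st: "s \<otimes> t \<in> carrier S" using s L(2) by simp
      have m1: "rep_action S s x \<in> rep_carrier S K n"
        unfolding rep_carrier_iff rep_action_def L(3) using a1 st L(1) by auto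
      have m3: "rep_action S (s \<otimes> u) x = rep_action S s (rep_action S u x)" if u: "u \<in> carrier S" for u
      proof -
        have ut: "u \<otimes> t \<in> carrier S" using u L(2) by simp
        have "(s \<otimes> u) <# (t <# H) = ((s \<otimes> u) \<otimes> t) <# H" using lcos_m_assoc[OF Hc[OF L(1)] _ L(2)] s u by simp
        also have "\<dots> = s <# ((u \<otimes> t) <# H)" using lcos_m_assoc[OF Hc[OF L(1)] s ut] s u L(2) by (simp add: m_assoc)
        also have "\<dots> = s <# (u <# (t <# H))" using lcos_m_assoc[OF Hc[OF L(1)] u L(2)] by simp
        finally show ?thesis unfolding rep_action_def L(3) by simp
      qed
      show ?thesis using m1 m3 a2 unfolding rep_action_def L(3) by simp
    next
      case R then show ?thesis unfolding rep_action_def rep_carrier_iff by auto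
    qed
  qed
  show ?thesis unfolding is_act_def using ne cl by blast
qed

lemma fixed_rep:
  fixes S (structure)
  assumes G: "comm_group S" and K: "K \<subseteq> proper_subgroups S" and x: "x \<in> rep_carrier S K n"
    and fx: "\<forall>s\<in>carrier S. rep_action S s x = x"
  shows "\<exists>i<n. x = Inr i"
proof (rule ccontr)
  assume "\<not> ?thesis"
  then obtain H t where Ht: "H \<in> K" "t \<in> carrier S" "x = Inl (H, t <# H)" using x unfolding rep_carrier_iff by blast
  have sg: "subgroup H S" "H \<noteq> carrier S" using K Ht(1) unfolding proper_subgroups_def by auto
  then obtain s where s: "s \<in> carrier S" "s \<notin> H" using subgroup.subset by blast
  have "s <# (t <# H) = t <# H" using fx s(1) Ht(3) unfolding rep_action_def by auto
  then show False using coset_fix[OF G sg(1) s(1) Ht(2)] s(2) by simp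
qed

lemma free_hom:
  fixes S (structure)
  assumes M: "monoid S" and act: "is_act S G g" and b: "\<forall>i\<in>X. b i \<in> G"
  shows "is_act_hom S (free_carrier S X) (free_action S) G g (\<lambda>p. g (snd p) (b (fst p)))"
  unfolding is_act_hom_def free_carrier_def free_action_def
  using act_props(1,3)[OF act] b by auto

lemma free_hom_val:
  fixes S (structure)
  assumes M: "monoid S" and h: "is_act_hom S (free_carrier S X) (free_action S) G g \<mu>"
    and i: "i \<in> X" and s: "s \<in> carrier S"
  shows "\<mu> (i, s) = g s (\<mu> (i, \<one>))"
proof -
  interpret monoid S by fact
  have "(i, \<one>) \<in> free_carrier S X" unfolding free_carrier_def using i by simp
  then have "\<mu> (free_action S s (i, \<one>)) = g s (\<mu> (i, \<one>))" using h s unfolding is_act_hom_def by blast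
  then show ?thesis unfolding free_action_def using s by simp
qed

lemma T_dprime_full:
  "T_dprime S G g X T = free_carrier S X \<times> free_carrier S X \<longleftrightarrow>
     (\<forall>\<mu>\<in>T_prime S G g X T. \<forall>p\<in>free_carrier S X. \<forall>q\<in>free_carrier S X. \<mu> p = \<mu> q)"
  unfolding T_dprime_def act_ker_def by blast


definition Tfix :: "('s,'m) monoid_scheme \<Rightarrow> nat set \<Rightarrow> ((nat \<times> 's) \<times> (nat \<times> 's)) set" where
  "Tfix S Y = {((i,s),(i,\<one>\<^bsub>S\<^esub>)) | i s. i \<in> Y \<and> s \<in> carrier S}"

definition I0 where "I0 S G g \<longleftrightarrow> T_dprime S G g {0} {} = free_carrier S {0} \<times> free_carrier S {0}"
definition I1 where "I1 S G g \<longleftrightarrow> T_dprime S G g {0,1} (Tfix S {0}) = free_carrier S {0,1} \<times> free_carrier S {0,1}"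
definition I2 where "I2 S G g \<longleftrightarrow> T_dprime S G g {0,1} (Tfix S {0,1}) = free_carrier S {0,1} \<times> free_carrier S {0,1}"

lemma inv_eq:
  assumes M: "monoid S" and e: "geom_equiv S A f B g"
  shows "(I0 S A f \<longleftrightarrow> I0 S B g) \<and> (I1 S A f \<longleftrightarrow> I1 S B g) \<and> (I2 S A f \<longleftrightarrow> I2 S B g)"
proof -
  have t1: "Tfix S {0} \<subseteq> free_carrier S {0,1} \<times> free_carrier S {0,1}"
    unfolding Tfix_def free_carrier_def using monoid.one_closed[OF M] by auto
  have t2: "Tfix S {0,1} \<subseteq> free_carrier S {0,1} \<times> free_carrier S {0,1}"
    unfolding Tfix_def free_carrier_def using monoid.one_closed[OF M] by auto
  have f1: "finite {0::nat}" "{0::nat} \<noteq> {}" "finite {0::nat,1}" "{0::nat,1} \<noteq> {}" by auto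
  have "T_dprime S A f {0} {} = T_dprime S B g {0} {}" using e f1 unfolding geom_equiv_def by blast
  moreover have "T_dprime S A f {0,1} (Tfix S {0}) = T_dprime S B g {0,1} (Tfix S {0})"
    using e f1 t1 unfolding geom_equiv_def by blast
  moreover have "T_dprime S A f {0,1} (Tfix S {0,1}) = T_dprime S B g {0,1} (Tfix S {0,1})"
    using e f1 t2 unfolding geom_equiv_def by blast
  ultimately show ?thesis unfolding I0_def I1_def I2_def by simp
qed

context
  fixes S :: "('s,'m) monoid_scheme" (structure) and K n
  assumes G: "comm_group S" and K: "K \<subseteq> proper_subgroups S"
    and actR: "is_act S (rep_carrier S K n) (rep_action S)"
begin

lemma M: "monoid S" using G comm_group_def group_def by blast
lemma Gr: "group S" using G comm_group_def by blast

lemma Ksub: "H \<in> K \<Longrightarrow> subgroup H S \<and> H \<noteq> carrier S" using K unfolding proper_subgroups_def by auto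

lemma tfix_val:
  assumes mu: "\<mu> \<in> T_prime S (rep_carrier S K n) (rep_action S) X (Tfix S Y)" and YX: "Y \<subseteq> X" and i: "i \<in> Y"
  shows "\<exists>j<n. \<mu> (i, \<one>) = Inr j" and "\<And>s. s \<in> carrier S \<Longrightarrow> \<mu> (i, s) = \<mu> (i, \<one>)"
proof -
  have h: "is_act_hom S (free_carrier S X) (free_action S) (rep_carrier S K n) (rep_action S) \<mu>"
    and T: "Tfix S Y \<subseteq> act_ker S X \<mu>" using mu unfolding T_prime_def by auto
  show eq: "\<mu> (i, s) = \<mu> (i, \<one>)" if s: "s \<in> carrier S" for s
  proof -
    have "((i,s),(i,\<one>)) \<in> Tfix S Y" unfolding Tfix_def using i s by blast
    then show ?thesis using T unfolding act_ker_def by auto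
  qed
  have inR: "\<mu> (i, \<one>) \<in> rep_carrier S K n" using h i YX monoid.one_closed[OF M]
    unfolding is_act_hom_def free_carrier_def by auto
  have "\<forall>s\<in>carrier S. rep_action S s (\<mu> (i, \<one>)) = \<mu> (i, \<one>)"
    using free_hom_val[OF M h] i YX eq by (metis subsetD)
  then show "\<exists>j<n. \<mu> (i, \<one>) = Inr j" using fixed_rep[OF G K inR] by blast
qed

lemma L2b: assumes "n < 2" shows "I2 S (rep_carrier S K n) (rep_action S)"
  unfolding I2_def T_dprime_full
proof (intro ballI)
  fix \<mu> p q assume mu: "\<mu> \<in> T_prime S (rep_carrier S K n) (rep_action S) {0, 1} (Tfix S {0, 1})"
    and p: "p \<in> free_carrier S {0, 1}" and q: "q \<in> free_carrier S {0, 1}"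
  have v: "\<mu> (i, s) = Inr 0" if i: "i \<in> {0,1}" and s: "s \<in> carrier S" for i s
  proof -
    obtain j where "j < n" "\<mu> (i, \<one>) = Inr j" using tfix_val(1)[OF mu subset_refl i] by blast
    then have "\<mu> (i, \<one>) = Inr 0" using assms by simp
    then show ?thesis using tfix_val(2)[OF mu subset_refl i s] by simp
  qed
  show "\<mu> p = \<mu> q" using v p q unfolding free_carrier_def by (cases p, cases q) auto
qed

lemma L0a: assumes "n = 0" shows "I1 S (rep_carrier S K n) (rep_action S)"
  unfolding I1_def T_dprime_full
proof (intro ballI)
  fix \<mu> p q assume mu: "\<mu> \<in> T_prime S (rep_carrier S K n) (rep_action S) {0, 1} (Tfix S {0})"
  have sb: "{0::nat} \<subseteq> {0,1}" by auto
  obtain j where "j < n" "\<mu> (0, \<one>) = Inr j" using tfix_val(1)[OF mu sb] by blast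
  then show "\<mu> p = \<mu> q" using assms by simp
qed

lemma L2a: assumes "n = 2" shows "\<not> I2 S (rep_carrier S K n) (rep_action S)"
proof -
  define \<mu> where "\<mu> = (\<lambda>p::nat \<times> 's. rep_action S (snd p) ((Inr (fst p)) :: 's set \<times> 's set + nat))"
  have b: "\<forall>i\<in>{0::nat,1}. Inr i \<in> rep_carrier S K n" unfolding rep_carrier_def using assms by auto
  have h: "is_act_hom S (free_carrier S {0,1}) (free_action S) (rep_carrier S K n) (rep_action S) \<mu>"
    unfolding \<mu>_def using free_hom[OF M actR b] by simp
  have mv: "\<mu> p = Inr (fst p)" for p unfolding \<mu>_def rep_action_def by simp
  have "Tfix S {0,1} \<subseteq> act_ker S {0,1} \<mu>"
    unfolding Tfix_def act_ker_def free_carrier_def using mv monoid.one_closed[OF M] by auto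
  then have "\<mu> \<in> T_prime S (rep_carrier S K n) (rep_action S) {0,1} (Tfix S {0,1})"
    unfolding T_prime_def using h by simp
  moreover have "(0,\<one>) \<in> free_carrier S {0,1}" "(1,\<one>) \<in> free_carrier S {0,1}"
    unfolding free_carrier_def using monoid.one_closed[OF M] by auto
  moreover have "\<mu> (0,\<one>) \<noteq> \<mu> (1,\<one>)" using mv by simp
  ultimately show ?thesis unfolding I2_def T_dprime_full by blast
qed

lemma L0b: assumes "n = 0" shows "\<not> I0 S (rep_carrier S K n) (rep_action S)"
proof -
  have "rep_carrier S K n \<noteq> {}" using act_props(4)[OF actR] .
  then obtain H where H: "H \<in> K" using assms unfolding rep_carrier_def by auto
  have sg: "subgroup H S" "H \<noteq> carrier S" using Ksub[OF H] by auto
  then obtain s where s: "s \<in> carrier S" "s \<notin> H" using subgroup.subset by blast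
  have one: "\<one> \<in> carrier S" using monoid.one_closed[OF M] .
  define b where "b = (\<lambda>i::nat. (Inl (H, \<one> <# H)) :: 's set \<times> 's set + nat)"
  define \<mu> where "\<mu> = (\<lambda>p::nat \<times> 's. rep_action S (snd p) (b (fst p)))"
  have bR: "\<forall>i\<in>{0::nat}. b i \<in> rep_carrier S K n" unfolding rep_carrier_def b_def using H one by auto
  have h: "is_act_hom S (free_carrier S {0}) (free_action S) (rep_carrier S K n) (rep_action S) \<mu>"
    unfolding \<mu>_def using free_hom[OF M actR bR] by simp
  then have "\<mu> \<in> T_prime S (rep_carrier S K n) (rep_action S) {0} {}" unfolding T_prime_def by simp
  moreover have "(0,s) \<in> free_carrier S {0}" "(0,\<one>) \<in> free_carrier S {0}"
    unfolding free_carrier_def using one s by auto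
  moreover have "\<mu> (0,s) \<noteq> \<mu> (0,\<one>)"
  proof -
    have e1: "\<mu> (0,\<one>) = b 0" unfolding \<mu>_def using act_props(2)[OF actR] bR by simp
    have "s <# (\<one> <# H) \<noteq> \<one> <# H" using coset_fix[OF G sg(1) s(1) one] s(2) by simp
    then show ?thesis using e1 unfolding \<mu>_def b_def rep_action_def by simp
  qed
  ultimately show ?thesis unfolding I0_def T_dprime_full by blast
qed

lemma L1: assumes "n = 1" shows "I0 S (rep_carrier S K n) (rep_action S) \<or> \<not> I1 S (rep_carrier S K n) (rep_action S)"
proof (cases "K = {}")
  case True
  then have R: "rep_carrier S K n = {Inr 0}" using assms unfolding rep_carrier_def by auto
  have "I0 S (rep_carrier S K n) (rep_action S)" unfolding I0_def T_dprime_full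
  proof (intro ballI)
    fix \<mu> p q assume mu: "\<mu> \<in> T_prime S (rep_carrier S K n) (rep_action S) {0} {}"
      and p: "p \<in> free_carrier S {0}" and q: "q \<in> free_carrier S {0}"
    then show "\<mu> p = \<mu> q" unfolding T_prime_def is_act_hom_def R by auto
  qed
  then show ?thesis by simp
next
  case False
  then obtain H where H: "H \<in> K" by auto
  have one: "\<one> \<in> carrier S" using monoid.one_closed[OF M] .
  define b where "b = (\<lambda>i::nat. if i = 0 then Inr 0 else (Inl (H, \<one> <# H)) :: 's set \<times> 's set + nat)"
  define \<mu> where "\<mu> = (\<lambda>p::nat \<times> 's. rep_action S (snd p) (b (fst p)))"
  have bR: "\<forall>i\<in>{0::nat,1}. b i \<in> rep_carrier S K n" unfolding rep_carrier_def b_def using H one assms by auto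
  have h: "is_act_hom S (free_carrier S {0,1}) (free_action S) (rep_carrier S K n) (rep_action S) \<mu>"
    unfolding \<mu>_def using free_hom[OF M actR bR] by simp
  have m0: "\<mu> (0, s) = Inr 0" for s unfolding \<mu>_def b_def rep_action_def by simp
  have "Tfix S {0} \<subseteq> act_ker S {0,1} \<mu>"
    unfolding Tfix_def act_ker_def free_carrier_def using m0 one by auto
  then have "\<mu> \<in> T_prime S (rep_carrier S K n) (rep_action S) {0,1} (Tfix S {0})"
    unfolding T_prime_def using h by simp
  moreover have "(0,\<one>) \<in> free_carrier S {0,1}" "(1,\<one>) \<in> free_carrier S {0,1}"
    unfolding free_carrier_def using one by auto
  moreover have "\<mu> (0,\<one>) \<noteq> \<mu> (1,\<one>)" unfolding \<mu>_def b_def rep_action_def by simp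
  ultimately have "\<not> I1 S (rep_carrier S K n) (rep_action S)" unfolding I1_def T_dprime_full by blast
  then show ?thesis by simp
qed

end


lemma sep1:
  fixes S (structure)
  assumes G: "group S" and actA: "is_act S A f" and actB: "is_act S B g"
    and cB: "\<forall>a\<in>A. c a \<in> B"
    and cst: "\<forall>a\<in>A. \<forall>s\<in>carrier S. f s a = a \<longrightarrow> g s (c a) = c a"
    and x: "x \<in> A"
  shows "\<exists>\<phi>. is_act_hom S A f B g \<phi> \<and> \<phi> x = c x"
  using orbit_hom[OF G actA actB cB cst, of "{x}"] x by auto

lemma sep2:
  fixes S (structure)
  assumes G: "group S" and actA: "is_act S A f" and actB: "is_act S B g"
    and cB: "\<forall>a\<in>A. c a \<in> B"
    and cst: "\<forall>a\<in>A. \<forall>s\<in>carrier S. f s a = a \<longrightarrow> g s (c a) = c a"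
    and x1: "x1 \<in> A" and x2: "x2 \<in> A"
    and d1: "\<forall>s\<in>carrier S. f s x1 \<noteq> x2" and d2: "\<forall>s\<in>carrier S. f s x2 \<noteq> x1"
    and ne: "c x1 \<noteq> c x2"
  shows "\<exists>\<phi>. is_act_hom S A f B g \<phi> \<and> \<phi> x1 \<noteq> \<phi> x2"
proof -
  have "\<forall>p\<in>{x1,x2}. \<forall>q\<in>{x1,x2}. q \<in> (\<lambda>s. f s p) ` carrier S \<longrightarrow> p = q"
    using d1 d2 by blast
  from orbit_hom[OF G actA actB cB cst _ this] x1 x2 obtain \<phi> where
    "is_act_hom S A f B g \<phi>" "\<phi> x1 = c x1" "\<phi> x2 = c x2" by auto
  then show ?thesis using ne by metis
qed

context
  fixes S :: "('s,'m) monoid_scheme" (structure) and A :: "'a set" and f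
  assumes G: "comm_group S" and actA: "is_act S A f"
begin

lemma Gr': "group S" using G comm_group_def by blast

interpretation comm_group S by (rule G)

definition fx where "fx a \<longleftrightarrow> (\<forall>s\<in>carrier S. f s a = a)"

definition K0 where "K0 = {stab S f a | a. a \<in> A \<and> stab S f a \<noteq> carrier S}"

definition n0 :: nat where "n0 = (if \<exists>e1\<in>A. \<exists>e2\<in>A. e1 \<noteq> e2 \<and> fx e1 \<and> fx e2 then 2
    else if \<exists>e\<in>A. fx e then 1 else 0)"

abbreviation "R \<equiv> rep_carrier S K0 n0"

lemma fx_stab: "a \<in> A \<Longrightarrow> fx a \<longleftrightarrow> stab S f a = carrier S"
  unfolding fx_def stab_def by auto

lemma K0_sub: "K0 \<subseteq> proper_subgroups S"
  unfolding K0_def proper_subgroups_def using stab_subgroup[OF Gr' actA] by auto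

lemma Inr_R: "Inr i \<in> R \<longleftrightarrow> i < n0"
  unfolding rep_carrier_def by auto

lemma Inl_R: "H \<in> K0 \<Longrightarrow> t \<in> carrier S \<Longrightarrow> Inl (H, t <# H) \<in> R"
  unfolding rep_carrier_def by auto

lemma Inl_R1: assumes "H \<in> K0" shows "Inl (H, H) \<in> R"
proof -
  have "H \<subseteq> carrier S" using assms K0_sub unfolding proper_subgroups_def using subgroup.subset by blast
  then have "\<one> <# H = H" using lcos_mult_one by simp
  then show ?thesis using Inl_R[OF assms one_closed] by simp
qed

lemma n0_pos: "a \<in> A \<Longrightarrow> fx a \<Longrightarrow> 0 < n0" unfolding n0_def by auto

lemma R_ne: "R \<noteq> {}"
proof -
  obtain a where a: "a \<in> A" using act_props(4)[OF actA] by auto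
  show ?thesis
  proof (cases "fx a")
    case True then show ?thesis using Inr_R n0_pos[OF a] by blast
  next
    case False
    then have "stab S f a \<in> K0" unfolding K0_def using fx_stab[OF a] a by auto
    then show ?thesis using Inl_R1 by blast
  qed
qed

lemma actR: "is_act S R (rep_action S)"
  using rep_act[OF Gr' _ R_ne] K0_sub unfolding proper_subgroups_def by auto

lemma sg_K0: "H \<in> K0 \<Longrightarrow> subgroup H S \<and> H \<noteq> carrier S"
  using K0_sub unfolding proper_subgroups_def by auto

lemma coset_ne: assumes H: "subgroup H S" and h: "h \<in> carrier S" "h \<notin> H"
  shows "h <# H \<noteq> H"
proof -
  have Hc: "H \<subseteq> carrier S" using H subgroup.subset by blast
  have "\<one> <# H = H" using lcos_mult_one[OF Hc] .
  then show ?thesis using coset_fix[OF G H h(1) one_closed] h(2) by simp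
qed

lemma stab_act: "a \<in> A \<Longrightarrow> s \<in> carrier S \<Longrightarrow> f s a = a \<longleftrightarrow> s \<in> stab S f a"
  unfolding stab_def by auto

definition c0 where "c0 a = (if fx a then Inr 0 else Inl (stab S f a, stab S f a))"

lemma c0R: assumes a: "a \<in> A" shows "c0 a \<in> R"
proof (cases "fx a")
  case True then show ?thesis unfolding c0_def using Inr_R n0_pos[OF a] by simp
next
  case False
  then have "stab S f a \<in> K0" unfolding K0_def using fx_stab[OF a] a by auto
  then show ?thesis unfolding c0_def using False Inl_R1 by simp
qed

lemma c0st: assumes a: "a \<in> A" and s: "s \<in> carrier S" and e: "f s a = a"
  shows "rep_action S s (c0 a) = c0 a"
proof (cases "fx a")
  case True then show ?thesis unfolding c0_def rep_action_def by simp
next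
  case False
  have "s \<in> stab S f a" using stab_act[OF a s] e by simp
  then have "s <# stab S f a = stab S f a" using coset_join3[OF s stab_subgroup[OF Gr' actA a]] by simp
  then show ?thesis using False unfolding c0_def rep_action_def by simp
qed

lemma sepA_d:
  assumes a1: "a1 \<in> A" and a2: "a2 \<in> A" and d1: "\<forall>s\<in>carrier S. f s a1 \<noteq> a2"
    and dR: "d \<in> R" and dst: "\<forall>s\<in>carrier S. f s a2 = a2 \<longrightarrow> rep_action S s d = d"
    and ne: "c0 a1 \<noteq> d"
  shows "\<exists>\<phi>. is_act_hom S A f R (rep_action S) \<phi> \<and> \<phi> a1 \<noteq> \<phi> a2"
proof -
  define c where "c = c0(a2 := d)"
  have d2: "\<forall>s\<in>carrier S. f s a2 \<noteq> a1"
  proof (intro ballI notI)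
    fix s assume s: "s \<in> carrier S" and e: "f s a2 = a1"
    have "a2 = f (inv s) a1" using orbit_sym[OF Gr' actA a2 s e[symmetric]] .
    then show False using d1 inv_closed[OF s] by blast
  qed
  have neq: "a1 \<noteq> a2" using d1 act_props(2)[OF actA a1] by force
  have cB: "\<forall>a\<in>A. c a \<in> R" unfolding c_def using c0R dR by simp
  have cst: "\<forall>a\<in>A. \<forall>s\<in>carrier S. f s a = a \<longrightarrow> rep_action S s (c a) = c a"
    unfolding c_def using c0st dst by simp
  have "c a1 \<noteq> c a2" unfolding c_def using neq ne by simp
  from sep2[OF Gr' actA actR cB cst a1 a2 d1 d2 this] show ?thesis .
qed

lemma sepA: "\<forall>a1\<in>A. \<forall>a2\<in>A. a1 \<noteq> a2 \<longrightarrow> (\<exists>\<phi>. is_act_hom S A f R (rep_action S) \<phi> \<and> \<phi> a1 \<noteq> \<phi> a2)"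
proof (intro ballI impI)
  fix a1 a2 assume a1: "a1 \<in> A" and a2: "a2 \<in> A" and neq: "a1 \<noteq> a2"
  have cB: "\<forall>a\<in>A. c0 a \<in> R" using c0R by simp
  have cst: "\<forall>a\<in>A. \<forall>s\<in>carrier S. f s a = a \<longrightarrow> rep_action S s (c0 a) = c0 a" using c0st by simp
  show "\<exists>\<phi>. is_act_hom S A f R (rep_action S) \<phi> \<and> \<phi> a1 \<noteq> \<phi> a2"
  proof (cases "\<exists>g\<in>carrier S. f g a1 = a2")
    case True
    then obtain g where g: "g \<in> carrier S" "f g a1 = a2" by blast
    obtain \<phi> where ph: "is_act_hom S A f R (rep_action S) \<phi>" "\<phi> a1 = c0 a1"
      using sep1[OF Gr' actA actR cB cst a1] by blast
    have gH: "g \<notin> stab S f a1" using stab_act[OF a1 g(1)] g neq by simp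
    then have nfx: "\<not> fx a1" using fx_stab[OF a1] g(1) by auto
    have sK: "stab S f a1 \<in> K0" unfolding K0_def using a1 nfx fx_stab[OF a1] by auto
    have "\<phi> a2 = rep_action S g (\<phi> a1)" using ph(1) g a1 unfolding is_act_hom_def by metis
    also have "\<dots> = Inl (stab S f a1, g <# stab S f a1)" using ph(2) nfx unfolding c0_def rep_action_def by simp
    finally have "\<phi> a2 \<noteq> \<phi> a1" using ph(2) nfx coset_ne[OF _ g(1) gH] sg_K0[OF sK] unfolding c0_def by auto
    then show ?thesis using ph(1) by metis
  next
    case False
    then have d1: "\<forall>s\<in>carrier S. f s a1 \<noteq> a2" by blast
    show ?thesis
    proof (cases "fx a1 \<and> fx a2")
      case True
      then have "n0 = 2" unfolding n0_def using a1 a2 neq by auto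
      then have dR: "Inr 1 \<in> R" using Inr_R by simp
      show ?thesis
        by (rule sepA_d[OF a1 a2 d1 dR]) (auto simp: rep_action_def c0_def True)
    next
      case nf: False
      show ?thesis
      proof (cases "\<not> fx a1 \<and> \<not> fx a2 \<and> stab S f a1 = stab S f a2")
        case True
        define H where "H = stab S f a2"
        have sK: "H \<in> K0" unfolding K0_def H_def using a2 True fx_stab[OF a2] by auto
        have sg: "subgroup H S" "H \<noteq> carrier S" using sg_K0[OF sK] by auto
        then obtain h where h: "h \<in> carrier S" "h \<notin> H" using subgroup.subset by blast
        have dR: "Inl (H, h <# H) \<in> R" using Inl_R[OF sK h(1)] .
        have dst: "\<forall>s\<in>carrier S. f s a2 = a2 \<longrightarrow> rep_action S s (Inl (H, h <# H)) = Inl (H, h <# H)"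
          using coset_fix[OF G sg(1) _ h(1)] stab_act[OF a2] unfolding rep_action_def H_def by simp
        have "c0 a1 \<noteq> Inl (H, h <# H)"
          using True coset_ne[OF sg(1) h] unfolding c0_def H_def by auto
        then show ?thesis using sepA_d[OF a1 a2 d1 dR dst] by blast
      next
        case False
        have ne: "c0 a1 \<noteq> c0 a2" using False nf unfolding c0_def by auto
        show ?thesis using sepA_d[OF a1 a2 d1 c0R[OF a2]] c0st[OF a2] ne by blast
      qed
    qed
  qed
qed


definition aH where "aH H = (SOME a. a \<in> A \<and> stab S f a = H)"
definition e0 where "e0 = (SOME e. e \<in> A \<and> fx e)"
definition e1 where "e1 = (SOME e. e \<in> A \<and> fx e \<and> e \<noteq> e0)"
definition cR where "cR x = (case x of Inl HC \<Rightarrow> aH (fst HC) | Inr i \<Rightarrow> (if i = 0 then e0 else e1))"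

lemma aH: assumes "H \<in> K0" shows "aH H \<in> A \<and> stab S f (aH H) = H"
proof -
  have "\<exists>a. a \<in> A \<and> stab S f a = H" using assms unfolding K0_def by auto
  then show ?thesis unfolding aH_def by (rule someI_ex)
qed

lemma e0: assumes "0 < n0" shows "e0 \<in> A \<and> fx e0"
proof -
  have "\<exists>e. e \<in> A \<and> fx e" using assms unfolding n0_def by (auto split: if_splits)
  then show ?thesis unfolding e0_def by (rule someI_ex)
qed

lemma e1: assumes "n0 = 2" shows "e1 \<in> A \<and> fx e1 \<and> e1 \<noteq> e0"
proof -
  obtain x y where xy: "x \<in> A" "y \<in> A" "x \<noteq> y" "fx x" "fx y"
    using assms unfolding n0_def by (auto split: if_splits)
  have "\<exists>e. e \<in> A \<and> fx e \<and> e \<noteq> e0" using xy by metis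
  then show ?thesis unfolding e1_def by (rule someI_ex)
qed

lemma R_cases:
  assumes "x \<in> R"
  obtains (L) H t where "H \<in> K0" "t \<in> carrier S" "x = Inl (H, t <# H)"
    | (Rr) i where "i < n0" "x = Inr i"
  using assms unfolding rep_carrier_iff by blast

lemma cR_A: assumes x: "x \<in> R" shows "cR x \<in> A"
  using x
proof (cases rule: R_cases)
  case (L H t) then show ?thesis unfolding cR_def using aH by simp
next
  case (Rr i)
  show ?thesis
  proof (cases "i = 0")
    case True then show ?thesis using Rr e0 unfolding cR_def by simp
  next
    case False
    then have "n0 = 2" using Rr unfolding n0_def by (auto split: if_splits)
    then show ?thesis using Rr e1 False unfolding cR_def by simp
  qed
qed

lemma cR_fx: assumes x: "x \<in> R" "\<exists>i. x = Inr i" shows "fx (cR x)"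
proof -
  obtain i where i: "i < n0" "x = Inr i" using x R_cases by (metis Inl_Inr_False)
  show ?thesis
  proof (cases "i = 0")
    case True then show ?thesis using i e0 unfolding cR_def by simp
  next
    case False
    then have "n0 = 2" using i unfolding n0_def by (auto split: if_splits)
    then show ?thesis using i e1 False unfolding cR_def by simp
  qed
qed

lemma cR_st: assumes x: "x \<in> R" and s: "s \<in> carrier S" and e: "rep_action S s x = x"
  shows "f s (cR x) = cR x"
  using x
proof (cases rule: R_cases)
  case (L H t)
  have sg: "subgroup H S" using sg_K0[OF L(1)] by simp
  have "s <# (t <# H) = t <# H" using e L(3) unfolding rep_action_def by simp
  then have "s \<in> H" using coset_fix[OF G sg s L(2)] by simp
  then show ?thesis using aH[OF L(1)] stab_act s L(3) unfolding cR_def by simp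
next
  case (Rr i)
  then show ?thesis using cR_fx[OF x] s unfolding fx_def by auto
qed

lemma rep_orb_Inr: "rep_action S s (Inr i) = Inr i" unfolding rep_action_def by simp
lemma rep_orb_Inl: "rep_action S s (Inl (H, C)) = Inl (H, s <# C)" unfolding rep_action_def by simp

lemma sepR: "\<forall>x1\<in>R. \<forall>x2\<in>R. x1 \<noteq> x2 \<longrightarrow> (\<exists>\<phi>. is_act_hom S R (rep_action S) A f \<phi> \<and> \<phi> x1 \<noteq> \<phi> x2)"
proof (intro ballI impI)
  fix x1 x2 assume x1: "x1 \<in> R" and x2: "x2 \<in> R" and neq: "x1 \<noteq> x2"
  have cB: "\<forall>x\<in>R. cR x \<in> A" using cR_A by simp
  have cst: "\<forall>x\<in>R. \<forall>s\<in>carrier S. rep_action S s x = x \<longrightarrow> f s (cR x) = cR x" using cR_st by simp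
  note two = sep2[OF Gr' actR actA cB cst x1 x2]
  show "\<exists>\<phi>. is_act_hom S R (rep_action S) A f \<phi> \<and> \<phi> x1 \<noteq> \<phi> x2"
    using x1
  proof (cases rule: R_cases)
    case (L H1 t1)
    note L1 = L
    show ?thesis using x2
    proof (cases rule: R_cases)
      case (L H2 t2)
      show ?thesis
      proof (cases "H1 = H2")
        case True
        have Hc: "H1 \<subseteq> carrier S" using sg_K0[OF L1(1)] subgroup.subset by blast
        define g where "g = t2 \<otimes> inv t1"
        have gc: "g \<in> carrier S" unfolding g_def using L1(2) L(2) by simp
        have "g \<otimes> t1 = t2" unfolding g_def using L1(2) L(2) by (simp add: m_assoc)
        then have x2e: "x2 = rep_action S g x1"
          using L1(3) L(3) True lcos_m_assoc[OF Hc gc L1(2)] unfolding rep_action_def by simp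
        obtain \<phi> where ph: "is_act_hom S R (rep_action S) A f \<phi>" "\<phi> x1 = cR x1"
          using sep1[OF Gr' actR actA cB cst x1] by blast
        have c1: "cR x1 = aH H1" unfolding cR_def L1(3) by simp
        have "\<phi> x2 = f g (\<phi> x1)" using ph(1) gc x1 unfolding x2e is_act_hom_def by blast
        moreover have "f g (aH H1) \<noteq> aH H1"
        proof
          assume "f g (aH H1) = aH H1"
          then have "g \<in> H1" using stab_act aH[OF L1(1)] gc by auto
          then have "g <# (t1 <# H1) = t1 <# H1" using coset_fix[OF G _ gc L1(2)] sg_K0[OF L1(1)] by simp
          then show False using x2e neq L1(3) unfolding rep_action_def by simp
        qed
        ultimately have "\<phi> x1 \<noteq> \<phi> x2" using ph(2) c1 by simp
        with ph(1) show ?thesis by blast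
      next
        case False
        show ?thesis
        proof (rule two)
          show "\<forall>s\<in>carrier S. rep_action S s x1 \<noteq> x2" unfolding L1(3) L(3) rep_orb_Inl using False by simp
          show "\<forall>s\<in>carrier S. rep_action S s x2 \<noteq> x1" unfolding L1(3) L(3) rep_orb_Inl using False by simp
          have "cR x1 = aH H1" "cR x2 = aH H2" unfolding cR_def L1(3) L(3) by simp_all
          moreover have "aH H1 \<noteq> aH H2" using aH[OF L1(1)] aH[OF L(1)] False by metis
          ultimately show "cR x1 \<noteq> cR x2" by simp
        qed
      qed
    next
      case (Rr j)
      show ?thesis
      proof (rule two)
        show "\<forall>s\<in>carrier S. rep_action S s x1 \<noteq> x2" unfolding L1(3) Rr(2) rep_orb_Inl by simp
        show "\<forall>s\<in>carrier S. rep_action S s x2 \<noteq> x1" unfolding L1(3) Rr(2) rep_orb_Inr by simp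
        have "fx (cR x2)" using cR_fx x2 Rr by blast
        moreover have "\<not> fx (cR x1)"
        proof -
          have "cR x1 = aH H1" unfolding cR_def L1(3) by simp
          then show ?thesis using aH[OF L1(1)] sg_K0[OF L1(1)] fx_stab[of "aH H1"] by simp
        qed
        ultimately show "cR x1 \<noteq> cR x2" by auto
      qed
    qed
  next
    case (Rr i)
    note R1 = Rr
    show ?thesis using x2
    proof (cases rule: R_cases)
      case (L H2 t2)
      show ?thesis
      proof (rule two)
        show "\<forall>s\<in>carrier S. rep_action S s x1 \<noteq> x2" unfolding L(3) R1(2) rep_orb_Inr by simp
        show "\<forall>s\<in>carrier S. rep_action S s x2 \<noteq> x1" unfolding L(3) R1(2) rep_orb_Inl by simp
        have "fx (cR x1)" using cR_fx x1 R1 by blast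
        moreover have "\<not> fx (cR x2)"
        proof -
          have "cR x2 = aH H2" unfolding cR_def L(3) by simp
          then show ?thesis using aH[OF L(1)] sg_K0[OF L(1)] fx_stab[of "aH H2"] by simp
        qed
        ultimately show "cR x1 \<noteq> cR x2" by auto
      qed
    next
      case (Rr j)
      have ij: "i \<noteq> j" using neq R1(2) Rr(2) by simp
      then have n2: "n0 = 2" using R1(1) Rr(1) unfolding n0_def by (auto split: if_splits)
      then have ij01: "(i = 0 \<and> j = 1) \<or> (i = 1 \<and> j = 0)" using ij R1(1) Rr(1) by auto
      show ?thesis
      proof (rule two)
        show "\<forall>s\<in>carrier S. rep_action S s x1 \<noteq> x2" unfolding R1(2) Rr(2) rep_orb_Inr using ij by simp
        show "\<forall>s\<in>carrier S. rep_action S s x2 \<noteq> x1" unfolding R1(2) Rr(2) rep_orb_Inr using ij by simp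
        have "cR x1 = (if i = 0 then e0 else e1)" "cR x2 = (if j = 0 then e0 else e1)"
          unfolding cR_def R1(2) Rr(2) by simp_all
        then show "cR x1 \<noteq> cR x2" using ij01 e1[OF n2] by auto
      qed
    qed
  qed
qed

lemma existence: "n0 < 3 \<and> K0 \<subseteq> proper_subgroups S \<and> is_act S R (rep_action S) \<and> geom_equiv S A f R (rep_action S)"
  using K0_sub actR geom_equiv_sep[OF sepR sepA] unfolding n0_def by auto

end


lemma nat_code:
  fixes n m :: nat and i0 i1 i2 :: bool
  assumes "n < 3" "m < 3"
    and "n = 2 \<longrightarrow> \<not> i2" "n < 2 \<longrightarrow> i2" "n = 0 \<longrightarrow> i1 \<and> \<not> i0" "n = 1 \<longrightarrow> i0 \<or> \<not> i1"
    and "m = 2 \<longrightarrow> \<not> i2" "m < 2 \<longrightarrow> i2" "m = 0 \<longrightarrow> i1 \<and> \<not> i0" "m = 1 \<longrightarrow> i0 \<or> \<not> i1"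
  shows "n = m"
proof -
  have "n = 0 \<or> n = 1 \<or> n = 2" "m = 0 \<or> m = 1 \<or> m = 2" using assms(1,2) by auto
  then show ?thesis using assms by auto
qed

lemma rep_code:
  assumes G: "comm_group S" and K: "K \<subseteq> proper_subgroups S" and actR: "is_act S (rep_carrier S K n) (rep_action S)"
  shows "(n = 2 \<longrightarrow> \<not> I2 S (rep_carrier S K n) (rep_action S)) \<and> (n < 2 \<longrightarrow> I2 S (rep_carrier S K n) (rep_action S))
    \<and> (n = 0 \<longrightarrow> I1 S (rep_carrier S K n) (rep_action S) \<and> \<not> I0 S (rep_carrier S K n) (rep_action S))
    \<and> (n = 1 \<longrightarrow> I0 S (rep_carrier S K n) (rep_action S) \<or> \<not> I1 S (rep_carrier S K n) (rep_action S))"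
  using L2a[OF G K actR] L2b[OF G K actR] L0a[OF G K actR] L0b[OF G K actR] L1[OF G K actR] by blast

theorem theorem3p22:
  fixes S :: "('s,'m) monoid_scheme" and A :: "'a set" and f :: "'s \<Rightarrow> 'a \<Rightarrow> 'a"
  assumes "comm_group S" and "is_act S A f"
  shows "\<exists>!n::nat. n < 3 \<and> (\<exists>K. K \<subseteq> proper_subgroups S
            \<and> is_act S (rep_carrier S K n) (rep_action S)
            \<and> geom_equiv S A f (rep_carrier S K n) (rep_action S))"
proof (rule ex_ex1I)
  show "\<exists>n::nat. n < 3 \<and> (\<exists>K. K \<subseteq> proper_subgroups S
            \<and> is_act S (rep_carrier S K n) (rep_action S)
            \<and> geom_equiv S A f (rep_carrier S K n) (rep_action S))"
    using existence[OF assms] by blast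
next
  have M: "monoid S" using assms(1) comm_group_def group_def by blast
  fix n m :: nat
  assume "n < 3 \<and> (\<exists>K. K \<subseteq> proper_subgroups S
            \<and> is_act S (rep_carrier S K n) (rep_action S)
            \<and> geom_equiv S A f (rep_carrier S K n) (rep_action S))"
  then obtain K where n3: "n < 3" and K: "K \<subseteq> proper_subgroups S" "is_act S (rep_carrier S K n) (rep_action S)"
     "geom_equiv S A f (rep_carrier S K n) (rep_action S)" by blast
  assume "m < 3 \<and> (\<exists>K. K \<subseteq> proper_subgroups S
            \<and> is_act S (rep_carrier S K m) (rep_action S)
            \<and> geom_equiv S A f (rep_carrier S K m) (rep_action S))"
  then obtain K' where m3: "m < 3" and K': "K' \<subseteq> proper_subgroups S" "is_act S (rep_carrier S K' m) (rep_action S)"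
     "geom_equiv S A f (rep_carrier S K' m) (rep_action S)" by blast
  have e1: "(I0 S A f \<longleftrightarrow> I0 S (rep_carrier S K n) (rep_action S)) \<and> (I1 S A f \<longleftrightarrow> I1 S (rep_carrier S K n) (rep_action S)) \<and> (I2 S A f \<longleftrightarrow> I2 S (rep_carrier S K n) (rep_action S))"
    using inv_eq[OF M K(3)] .
  have e2: "(I0 S A f \<longleftrightarrow> I0 S (rep_carrier S K' m) (rep_action S)) \<and> (I1 S A f \<longleftrightarrow> I1 S (rep_carrier S K' m) (rep_action S)) \<and> (I2 S A f \<longleftrightarrow> I2 S (rep_carrier S K' m) (rep_action S))"
    using inv_eq[OF M K'(3)] .
  have c1: "(n = 2 \<longrightarrow> \<not> I2 S A f) \<and> (n < 2 \<longrightarrow> I2 S A f) \<and> (n = 0 \<longrightarrow> I1 S A f \<and> \<not> I0 S A f) \<and> (n = 1 \<longrightarrow> I0 S A f \<or> \<not> I1 S A f)"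
    using rep_code[OF assms(1) K(1,2)] e1 by simp
  have c2: "(m = 2 \<longrightarrow> \<not> I2 S A f) \<and> (m < 2 \<longrightarrow> I2 S A f) \<and> (m = 0 \<longrightarrow> I1 S A f \<and> \<not> I0 S A f) \<and> (m = 1 \<longrightarrow> I0 S A f \<or> \<not> I1 S A f)"
    using rep_code[OF assms(1) K'(1,2)] e2 by simp
  show "n = m" using nat_code[OF n3 m3] c1 c2 by blast
qed

end
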